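(* Let $S$ be a semigroup with unit element $1$, let $X$ be a nonempty set, and let $S_1,\dots,S_n$ be unital subsemigroups of $S$ acting on $X$ from the right (with $x(st)=(xs)t$ and the unit acting as the identity). Suppose that each $S_j$ is left-amenable and that the actions of the $S_j$ commute, i.e. $(xs)t=(xt)s$ for all $x\in X$, $s\in S_i$, $t\in S_j$, $i\neq j$. For $s\in S$ let $S_s:\mathbb{C}^X\to\mathbb{C}^X$ be the Koopman operator $S_sf(x)=f(xs)$. Then for every bounded function $f:X\to\mathbb{C}$ the following are equivalent: (i) $(S_{s_1}-\mathrm{Id})(S_{s_2}-\mathrm{Id})\cdots(S_{s_n}-\mathrm{Id})f=0$ for all $s_j\in S_j$, $j=1,\dots,n$; (ii) there exist functions $f_1,\dots,f_n:X\to\mathbb{C}$ with $f=f_1+\cdots+f_n$ such that for each $j$ the function $f_j$ is $S_j$-invariant, i.e. $S_{s}f_j=f_j$ for all $s\in S_j$.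
   Context: A semigroup $S_j$ is left-amenable if there is a left-invariant mean on $\ell^\infty(S_j)$, i.e. a positive linear functional $\mu$ on $\ell^\infty(S_j)$ with $\mu(\mathbf 1)=1$ and $\mu(g(s\,\cdot))=\mu(g)$ for all $g\in\ell^\infty(S_j)$, $s\in S_j$. *)

theory Defs
  imports "HOL-Analysis.Analysis"
begin

text \<open>Left-invariant mean on bounded complex functions on a subset T of a monoid.
  Elements of l-infinity(T) are represented by functions bounded on T; the mean must
  only depend on the values on T.\<close>
definition left_invariant_mean :: "'a::monoid_mult set \<Rightarrow> (('a \<Rightarrow> complex) \<Rightarrow> complex) \<Rightarrow> bool" where
  "left_invariant_mean T \<mu> \<longleftrightarrow>
     (\<forall>g h. bounded (g ` T) \<longrightarrow> (\<forall>t\<in>T. g t = h t) \<longrightarrow> \<mu> g = \<mu> h) \<and>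
     (\<forall>g h a b. bounded (g ` T) \<longrightarrow> bounded (h ` T) \<longrightarrow>
        \<mu> (\<lambda>t. a * g t + b * h t) = a * \<mu> g + b * \<mu> h) \<and>
     (\<forall>g. bounded (g ` T) \<longrightarrow> (\<forall>t\<in>T. Im (g t) = 0 \<and> Re (g t) \<ge> 0) \<longrightarrow>
        Im (\<mu> g) = 0 \<and> Re (\<mu> g) \<ge> 0) \<and>
     \<mu> (\<lambda>_. 1) = 1 \<and>
     (\<forall>g. \<forall>s\<in>T. bounded (g ` T) \<longrightarrow> \<mu> (\<lambda>t. g (s * t)) = \<mu> g)"

definition left_amenable :: "'a::monoid_mult set \<Rightarrow> bool" where
  "left_amenable T \<longleftrightarrow> (\<exists>\<mu>. left_invariant_mean T \<mu>)"

definition unital_subsemigroup :: "'a::monoid_mult set \<Rightarrow> bool" where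
  "unital_subsemigroup T \<longleftrightarrow> 1 \<in> T \<and> (\<forall>s\<in>T. \<forall>t\<in>T. s * t \<in> T)"

definition right_action :: "('x \<Rightarrow> 'a::monoid_mult \<Rightarrow> 'x) \<Rightarrow> bool" where
  "right_action act \<longleftrightarrow> (\<forall>x. act x 1 = x) \<and> (\<forall>x s t. act x (s * t) = act (act x s) t)"

definition koopman :: "('x \<Rightarrow> 'a \<Rightarrow> 'x) \<Rightarrow> 'a \<Rightarrow> ('x \<Rightarrow> complex) \<Rightarrow> ('x \<Rightarrow> complex)" where
  "koopman act s f = (\<lambda>x. f (act x s))"

text \<open>diff_chain act s k f = (S_{s 1} - Id) ... (S_{s k} - Id) f.\<close>
fun diff_chain :: "('x \<Rightarrow> 'a \<Rightarrow> 'x) \<Rightarrow> (nat \<Rightarrow> 'a) \<Rightarrow> nat \<Rightarrow> ('x \<Rightarrow> complex) \<Rightarrow> ('x \<Rightarrow> complex)" where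
  "diff_chain act s 0 f = f"
| "diff_chain act s (Suc k) f = diff_chain act s k (\<lambda>x. koopman act (s (Suc k)) f x - f x)"

end

theory Submission
  imports Defs
begin

lemma dc_cong:
  "(\<forall>i\<in>{1..k}. s i = s' i) \<Longrightarrow> diff_chain act s k g = diff_chain act s' k g"
  by (induction k arbitrary: g) auto

lemma dc_zero: "diff_chain act s k (\<lambda>_. 0) = (\<lambda>_. 0)"
  by (induction k) (auto simp: koopman_def)

lemma dc_diff:
  "diff_chain act s k (\<lambda>x. f x - g x) = (\<lambda>x. diff_chain act s k f x - diff_chain act s k g x)"
proof (induction k arbitrary: f g)
  case 0 then show ?case by simp
next
  case (Suc k)
  have "(\<lambda>x. koopman act (s (Suc k)) (\<lambda>x. f x - g x) x - (f x - g x))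
     = (\<lambda>x. (\<lambda>x. koopman act (s (Suc k)) f x - f x) x - (\<lambda>x. koopman act (s (Suc k)) g x - g x) x)"
    by (simp add: koopman_def algebra_simps)
  then show ?case using Suc by simp
qed

lemma dc_sum:
  "diff_chain act s k (\<lambda>x. \<Sum>j\<in>J. g j x) = (\<lambda>x. \<Sum>j\<in>J. diff_chain act s k (g j) x)"
proof (induction k arbitrary: g)
  case 0 then show ?case by simp
next
  case (Suc k)
  have "(\<lambda>x. koopman act (s (Suc k)) (\<lambda>x. \<Sum>j\<in>J. g j x) x - (\<Sum>j\<in>J. g j x))
      = (\<lambda>x. \<Sum>j\<in>J. (\<lambda>j x. koopman act (s (Suc k)) (g j) x - g j x) j x)"
    by (simp add: koopman_def sum_subtractf)
  then show ?case using Suc by simp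
qed

lemma dc_inv:
  assumes "j \<in> {1..k}" "\<forall>x. g (act x (s j)) = g x"
    "\<forall>i\<in>{1..k}. \<forall>x. act (act x (s i)) (s j) = act (act x (s j)) (s i)"
  shows "diff_chain act s k g = (\<lambda>_. 0)"
using assms proof (induction k arbitrary: g)
  case 0 then show ?case by simp
next
  case (Suc k)
  show ?case
  proof (cases "j = Suc k")
    case True
    then have "(\<lambda>x. koopman act (s (Suc k)) g x - g x) = (\<lambda>_. 0)"
      using Suc.prems by (auto simp: koopman_def)
    then show ?thesis by (simp add: dc_zero)
  next
    case False
    then have j: "j \<in> {1..k}" using Suc.prems by auto
    let ?h = "\<lambda>x. koopman act (s (Suc k)) g x - g x"
    have "\<forall>x. ?h (act x (s j)) = ?h x"
    proof
      fix x
      have c: "act (act x (s (Suc k))) (s j) = act (act x (s j)) (s (Suc k))"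
        using Suc.prems(3) by auto
      show "?h (act x (s j)) = ?h x"
        using Suc.prems(2) by (simp add: koopman_def c[symmetric])
    qed
    then have "diff_chain act s k ?h = (\<lambda>_. 0)"
      using Suc.IH[OF j] Suc.prems(3) by auto
    then show ?thesis by simp
  qed
qed

lemma dc_delta:
  assumes "\<forall>i\<in>{1..k}. \<forall>x. act (act x (s i)) t = act (act x t) (s i)"
  shows "diff_chain act s k (\<lambda>x. g (act x t) - g x)
       = (\<lambda>x. diff_chain act s k g (act x t) - diff_chain act s k g x)"
using assms proof (induction k arbitrary: g)
  case 0 then show ?case by simp
next
  case (Suc k)
  let ?G = "\<lambda>x. g (act x (s (Suc k))) - g x"
  have c: "act (act x (s (Suc k))) t = act (act x t) (s (Suc k))" for x
    using Suc.prems by auto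
  have "(\<lambda>x. koopman act (s (Suc k)) (\<lambda>x. g (act x t) - g x) x - (g (act x t) - g x))
      = (\<lambda>x. ?G (act x t) - ?G x)"
    by (simp add: koopman_def c algebra_simps)
  moreover have "diff_chain act s k (\<lambda>x. ?G (act x t) - ?G x)
     = (\<lambda>x. diff_chain act s k ?G (act x t) - diff_chain act s k ?G x)"
    using Suc.IH Suc.prems by auto
  ultimately show ?case by (simp add: koopman_def)
qed

lemma bnd_lin:
  assumes "bounded (g ` T)" "bounded (h ` T)"
  shows "bounded ((\<lambda>t. a * g t + b * (h t::complex)) ` T)"
proof -
  obtain B1 where B1: "\<forall>t\<in>T. norm (g t) \<le> B1" using assms(1) unfolding bounded_iff by auto
  obtain B2 where B2: "\<forall>t\<in>T. norm (h t) \<le> B2" using assms(2) unfolding bounded_iff by auto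
  have "norm (a * g t + b * h t) \<le> norm a * B1 + norm b * B2" if "t \<in> T" for t
  proof -
    have "norm (a * g t + b * h t) \<le> norm a * norm (g t) + norm b * norm (h t)"
      by (metis norm_mult norm_triangle_ineq)
    also have "\<dots> \<le> norm a * B1 + norm b * B2"
      using B1 B2 that by (intro add_mono mult_left_mono) auto
    finally show ?thesis .
  qed
  then show ?thesis unfolding bounded_iff by auto
qed

lemma bnd_const: "bounded ((\<lambda>_. c) ` T)"
  by (rule bounded_subset[of "{c}"]) auto

lemma lim_real:
  assumes mu: "left_invariant_mean T \<mu>" and b: "bounded (w ` T)"
    and r: "\<forall>t\<in>T. Im (w t) = 0 \<and> \<bar>Re (w t)\<bar> \<le> M"
  shows "norm (\<mu> w) \<le> M"
proof -
  have lin: "\<And>g h a b. bounded (g ` T) \<Longrightarrow> bounded (h ` T) \<Longrightarrow> \<mu> (\<lambda>t. a * g t + b * h t) = a * \<mu> g + b * \<mu> h"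
    and pos: "\<And>g. bounded (g ` T) \<Longrightarrow> (\<forall>t\<in>T. Im (g t) = 0 \<and> Re (g t) \<ge> 0) \<Longrightarrow> Im (\<mu> g) = 0 \<and> Re (\<mu> g) \<ge> 0"
    and one: "\<mu> (\<lambda>_. 1) = 1"
    using mu unfolding left_invariant_mean_def by blast+
  have c1: "bounded ((\<lambda>_. 1::complex) ` T)" by (rule bnd_const)
  have e1: "\<mu> (\<lambda>t. of_real M * 1 + 1 * w t) = of_real M + \<mu> w"
    using lin[OF c1 b, of "of_real M" 1] one by simp
  have e2: "\<mu> (\<lambda>t. of_real M * 1 + (-1) * w t) = of_real M - \<mu> w"
    using lin[OF c1 b, of "of_real M" "-1"] one by simp
  have p1: "Im (\<mu> (\<lambda>t. of_real M * 1 + 1 * w t)) = 0 \<and> Re (\<mu> (\<lambda>t. of_real M * 1 + 1 * w t)) \<ge> 0"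
    by (rule pos[OF bnd_lin[OF c1 b]]) (use r in auto)
  have p2: "Im (\<mu> (\<lambda>t. of_real M * 1 + (-1) * w t)) = 0 \<and> Re (\<mu> (\<lambda>t. of_real M * 1 + (-1) * w t)) \<ge> 0"
    by (rule pos[OF bnd_lin[OF c1 b]]) (use r in auto)
  from p1 p2 e1 e2 have "Im (\<mu> w) = 0" "\<bar>Re (\<mu> w)\<bar> \<le> M" by auto
  then show ?thesis by (simp add: cmod_eq_Re)
qed

lemma lim_norm:
  assumes mu: "left_invariant_mean T \<mu>" and b: "bounded (g ` T)"
    and r: "\<forall>t\<in>T. norm (g t) \<le> M"
  shows "norm (\<mu> g) \<le> 2 * M"
proof -
  have lin: "\<And>g h a b. bounded (g ` T) \<Longrightarrow> bounded (h ` T) \<Longrightarrow> \<mu> (\<lambda>t. a * g t + b * h t) = a * \<mu> g + b * \<mu> h"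
    using mu unfolding left_invariant_mean_def by blast
  define rr where "rr = (\<lambda>t. complex_of_real (Re (g t)))"
  define ii where "ii = (\<lambda>t. complex_of_real (Im (g t)))"
  have nr: "\<forall>t\<in>T. Im (rr t) = 0 \<and> \<bar>Re (rr t)\<bar> \<le> M"
    using r abs_Re_le_cmod order_trans unfolding rr_def by fastforce
  have ni: "\<forall>t\<in>T. Im (ii t) = 0 \<and> \<bar>Re (ii t)\<bar> \<le> M"
    using r abs_Im_le_cmod order_trans unfolding ii_def by fastforce
  have br: "bounded (rr ` T)" unfolding bounded_iff using nr by (auto simp: cmod_eq_Re)
  have bi: "bounded (ii ` T)" unfolding bounded_iff using ni by (auto simp: cmod_eq_Re)
  have "g = (\<lambda>t. 1 * rr t + \<i> * ii t)"
    unfolding rr_def ii_def by (rule ext) (simp add: complex_eq_iff)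
  then have "\<mu> g = \<mu> rr + \<i> * \<mu> ii" using lin[OF br bi, of 1 \<i>] by simp
  then have "norm (\<mu> g) \<le> norm (\<mu> rr) + norm (\<mu> ii)"
    by (metis norm_ii norm_mult norm_triangle_ineq mult_1)
  also have "\<dots> \<le> M + M"
    using lim_real[OF mu br nr] lim_real[OF mu bi ni] by simp
  finally show ?thesis by simp
qed

lemma lim_local:
  assumes mu: "left_invariant_mean T \<mu>" and "\<forall>t\<in>T. g t = c"
  shows "\<mu> g = c"
proof -
  have loc: "\<And>g h. bounded (g ` T) \<Longrightarrow> (\<forall>t\<in>T. g t = h t) \<Longrightarrow> \<mu> g = \<mu> h"
    and lin: "\<And>g h a b. bounded (g ` T) \<Longrightarrow> bounded (h ` T) \<Longrightarrow> \<mu> (\<lambda>t. a * g t + b * h t) = a * \<mu> g + b * \<mu> h"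
    and one: "\<mu> (\<lambda>_. 1) = 1"
    using mu unfolding left_invariant_mean_def by blast+
  have "\<mu> (\<lambda>_. c) = c"
    using lin[OF bnd_const bnd_const, of c "1::complex" 0 "1::complex"] one by simp
  moreover have "\<mu> (\<lambda>_. c) = \<mu> g" by (rule loc[OF bnd_const]) (use assms in auto)
  ultimately show ?thesis by simp
qed

lemma bnd_comp: "bounded (range g) \<Longrightarrow> bounded ((\<lambda>u. g (act x u)) ` T)"
  by (rule bounded_subset) auto

lemma bnd_diff:
  assumes "bounded (range f)" "bounded (range (g::'x \<Rightarrow> complex))"
  shows "bounded (range (\<lambda>x. f x - g x))"
proof -
  have "bounded ((\<lambda>t. 1 * f t + (-1) * g t) ` UNIV)" by (rule bnd_lin[OF assms])
  then show ?thesis by simp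
qed

lemma bnd_delta: "bounded (range (g::'x \<Rightarrow> complex)) \<Longrightarrow> bounded (range (\<lambda>x. g (act x t) - g x))"
  by (rule bnd_diff) (auto intro: bounded_subset)

lemma bnd_dc: "bounded (range g) \<Longrightarrow> bounded (range (diff_chain act s k g))"
proof (induction k arbitrary: g)
  case 0 then show ?case by simp
next
  case (Suc k)
  have "bounded (range (\<lambda>x. g (act x (s (Suc k))) - g x))" by (rule bnd_delta[OF Suc.prems])
  then show ?case using Suc.IH by (simp add: koopman_def)
qed

lemma bnd_P:
  assumes mu: "left_invariant_mean T \<mu>" and b: "bounded (range g)"
  shows "bounded (range (\<lambda>x. \<mu> (\<lambda>u. g (act x u))))"
proof -
  obtain B where B: "\<forall>y. norm (g y) \<le> B" using b unfolding bounded_iff by auto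
  have "norm (\<mu> (\<lambda>u. g (act x u))) \<le> 2 * B" for x
    by (rule lim_norm[OF mu bnd_comp[OF b]]) (use B in auto)
  then show ?thesis unfolding bounded_iff by auto
qed

lemma dc_P:
  assumes mu: "left_invariant_mean T \<mu>"
    and c: "\<forall>i\<in>{1..k}. \<forall>u\<in>T. \<forall>x. act (act x (s i)) u = act (act x u) (s i)"
    and b: "bounded (range g)"
  shows "diff_chain act s k (\<lambda>x. \<mu> (\<lambda>u. g (act x u))) = (\<lambda>x. \<mu> (\<lambda>u. diff_chain act s k g (act x u)))"
using c b proof (induction k arbitrary: g)
  case 0 then show ?case by simp
next
  case (Suc k)
  have loc: "\<And>g h. bounded (g ` T) \<Longrightarrow> (\<forall>t\<in>T. g t = h t) \<Longrightarrow> \<mu> g = \<mu> h"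
    and lin: "\<And>g h a b. bounded (g ` T) \<Longrightarrow> bounded (h ` T) \<Longrightarrow> \<mu> (\<lambda>t. a * g t + b * h t) = a * \<mu> g + b * \<mu> h"
    using mu unfolding left_invariant_mean_def by blast+
  let ?G = "\<lambda>y. g (act y (s (Suc k))) - g y"
  have bG: "bounded (range ?G)" by (rule bnd_delta[OF Suc.prems(2)])
  have eq: "(\<lambda>x. koopman act (s (Suc k)) (\<lambda>x. \<mu> (\<lambda>u. g (act x u))) x - \<mu> (\<lambda>u. g (act x u)))
     = (\<lambda>x. \<mu> (\<lambda>u. ?G (act x u)))"
  proof
    fix x
    have b1: "bounded ((\<lambda>u. g (act (act x u) (s (Suc k)))) ` T)"
      by (rule bounded_subset[OF Suc.prems(2)]) auto
    have b2: "bounded ((\<lambda>u. g (act x u)) ` T)" by (rule bnd_comp[OF Suc.prems(2)])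
    have "\<mu> (\<lambda>u. ?G (act x u)) = \<mu> (\<lambda>u. 1 * g (act (act x u) (s (Suc k))) + (-1) * g (act x u))"
      by simp
    also have "\<dots> = \<mu> (\<lambda>u. g (act (act x u) (s (Suc k)))) - \<mu> (\<lambda>u. g (act x u))"
      using lin[OF b1 b2, of 1 "-1"] by simp
    also have "\<mu> (\<lambda>u. g (act (act x u) (s (Suc k)))) = \<mu> (\<lambda>u. g (act (act x (s (Suc k))) u))"
      by (rule loc[OF b1]) (use Suc.prems(1) in auto)
    finally show "koopman act (s (Suc k)) (\<lambda>x. \<mu> (\<lambda>u. g (act x u))) x - \<mu> (\<lambda>u. g (act x u))
       = \<mu> (\<lambda>u. ?G (act x u))" by (simp add: koopman_def)
  qed
  have "diff_chain act s k (\<lambda>x. \<mu> (\<lambda>u. ?G (act x u))) = (\<lambda>x. \<mu> (\<lambda>u. diff_chain act s k ?G (act x u)))"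
    using Suc.IH[OF _ bG] Suc.prems(1) by auto
  then show ?case using eq by (simp add: koopman_def)
qed

lemma main:
  fixes act :: "'x \<Rightarrow> 'a::monoid_mult \<Rightarrow> 'x" and f :: "'x \<Rightarrow> complex"
  shows "right_action act \<Longrightarrow> (\<And>j. j \<in> {1..n} \<Longrightarrow> left_amenable (Ss j)) \<Longrightarrow>
    (\<And>i j s t x. i \<in> {1..n} \<Longrightarrow> j \<in> {1..n} \<Longrightarrow> i \<noteq> j \<Longrightarrow>
                 s \<in> Ss i \<Longrightarrow> t \<in> Ss j \<Longrightarrow> act (act x s) t = act (act x t) s) \<Longrightarrow>
    bounded (range f) \<Longrightarrow>
    (\<forall>s. (\<forall>j\<in>{1..n}. s j \<in> Ss j) \<longrightarrow> diff_chain act s n f = (\<lambda>_. 0)) \<Longrightarrow>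
    (\<exists>fs :: nat \<Rightarrow> 'x \<Rightarrow> complex. f = (\<lambda>x. \<Sum>j=1..n. fs j x) \<and>
            (\<forall>j\<in>{1..n}. \<forall>s\<in>Ss j. koopman act s (fs j) = fs j))"
proof (induction n arbitrary: f)
  case 0
  have "f = (\<lambda>_. 0)" using 0(5) by auto
  then show ?case by auto
next
  case (Suc m)
  note act = Suc.prems(1)
  obtain \<mu> where mu: "left_invariant_mean (Ss (Suc m)) \<mu>"
    using Suc.prems(2)[of "Suc m"] unfolding left_amenable_def by auto
  define P where "P = (\<lambda>x. \<mu> (\<lambda>u. f (act x u)))"
  define h where "h = (\<lambda>x. f x - P x)"
  have bP: "bounded (range P)" unfolding P_def by (rule bnd_P[OF mu Suc.prems(4)])
  have hb: "bounded (range h)" unfolding h_def by (rule bnd_diff[OF Suc.prems(4) bP])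
  have Pinv: "koopman act s P = P" if s: "s \<in> Ss (Suc m)" for s
  proof
    fix x
    have inv: "\<And>g. bounded (g ` Ss (Suc m)) \<Longrightarrow> \<mu> (\<lambda>t. g (s * t)) = \<mu> g"
      using mu s unfolding left_invariant_mean_def by blast
    have "(\<lambda>u. f (act (act x s) u)) = (\<lambda>u. (\<lambda>v. f (act x v)) (s * u))"
      using act unfolding right_action_def by simp
    then show "koopman act s P x = P x"
      unfolding koopman_def P_def using inv[OF bnd_comp[OF Suc.prems(4)]] by simp
  qed
  have hz: "\<forall>s. (\<forall>j\<in>{1..m}. s j \<in> Ss j) \<longrightarrow> diff_chain act s m h = (\<lambda>_. 0)"
  proof (intro allI impI)
    fix s assume s: "\<forall>j\<in>{1..m}. s j \<in> Ss j"
    define D where "D = diff_chain act s m f"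
    have cm: "\<forall>i\<in>{1..m}. \<forall>u\<in>Ss (Suc m). \<forall>x. act (act x (s i)) u = act (act x u) (s i)"
    proof (intro ballI allI)
      fix i u x assume i: "i \<in> {1..m}" and u: "u \<in> Ss (Suc m)"
      show "act (act x (s i)) u = act (act x u) (s i)"
        using Suc.prems(3)[of i "Suc m" "s i" u x] s i u by auto
    qed
    have Dinv: "D (act x t) = D x" if t: "t \<in> Ss (Suc m)" for t x
    proof -
      let ?s' = "s(Suc m := t)"
      have "\<forall>j\<in>{1..Suc m}. ?s' j \<in> Ss j" using s t by (auto simp: le_Suc_eq)
      hence "diff_chain act ?s' (Suc m) f = (\<lambda>_. 0)" using Suc.prems(5) by blast
      hence "diff_chain act ?s' m (\<lambda>x. f (act x t) - f x) = (\<lambda>_. 0)" by (simp add: koopman_def)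
      moreover have "diff_chain act ?s' m (\<lambda>x. f (act x t) - f x) = diff_chain act s m (\<lambda>x. f (act x t) - f x)"
        by (rule dc_cong) auto
      moreover have "diff_chain act s m (\<lambda>x. f (act x t) - f x) = (\<lambda>x. D (act x t) - D x)"
        unfolding D_def by (rule dc_delta) (use cm t in auto)
      ultimately have "(\<lambda>x. D (act x t) - D x) = (\<lambda>_. 0)" by simp
      then have "D (act x t) - D x = 0" by (rule fun_cong)
      then show ?thesis by simp
    qed
    have "diff_chain act s m P = (\<lambda>x. \<mu> (\<lambda>u. D (act x u)))"
      unfolding P_def D_def by (rule dc_P[OF mu cm Suc.prems(4)])
    also have "\<dots> = D"
    proof
      fix x show "\<mu> (\<lambda>u. D (act x u)) = D x" by (rule lim_local[OF mu]) (use Dinv in auto)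
    qed
    finally have "diff_chain act s m P = D" .
    then show "diff_chain act s m h = (\<lambda>_. 0)"
      unfolding h_def dc_diff D_def by simp
  qed
  have amen': "left_amenable (Ss j)" if "j \<in> {1..m}" for j using Suc.prems(2) that by auto
  have comm': "act (act x s) t = act (act x t) s"
    if "i \<in> {1..m}" "j \<in> {1..m}" "i \<noteq> j" "s \<in> Ss i" "t \<in> Ss j" for i j s t x
    using Suc.prems(3)[of i j s t x] that by auto
  obtain fs where fs: "h = (\<lambda>x. \<Sum>j=1..m. fs j x)"
      "\<forall>j\<in>{1..m}. \<forall>s\<in>Ss j. koopman act s (fs j) = fs j"
  proof -
    have "\<exists>fs. h = (\<lambda>x. \<Sum>j=1..m. fs j x) \<and> (\<forall>j\<in>{1..m}. \<forall>s\<in>Ss j. koopman act s (fs j) = fs j)"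
      apply (rule Suc.IH[OF act _ _ hb hz])
      using amen' apply blast
      using comm' apply blast
      done
    then show ?thesis using that by blast
  qed
  define fs' where "fs' = fs(Suc m := P)"
  have s1: "(\<Sum>j=1..m. fs' j x) = (\<Sum>j=1..m. fs j x)" for x
    unfolding fs'_def by (rule sum.cong) auto
  have "f = (\<lambda>x. \<Sum>j=1..Suc m. fs' j x)"
  proof
    fix x
    have "h x = (\<Sum>j=1..m. fs j x)" using fs(1) by metis
    then show "f x = (\<Sum>j=1..Suc m. fs' j x)"
      using s1[of x] by (simp add: h_def fs'_def algebra_simps)
  qed
  moreover have "\<forall>j\<in>{1..Suc m}. \<forall>s\<in>Ss j. koopman act s (fs' j) = fs' j"
    using fs(2) Pinv unfolding fs'_def by (auto simp: le_Suc_eq)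
  ultimately show ?case by blast
qed

theorem theorem1p1:
  fixes act :: "'x \<Rightarrow> 'a::monoid_mult \<Rightarrow> 'x"
    and Ss :: "nat \<Rightarrow> 'a set"
    and n :: nat
    and f :: "'x \<Rightarrow> complex"
  assumes act: "right_action act"
    and sub: "\<And>j. j \<in> {1..n} \<Longrightarrow> unital_subsemigroup (Ss j)"
    and amen: "\<And>j. j \<in> {1..n} \<Longrightarrow> left_amenable (Ss j)"
    and comm: "\<And>i j s t x. i \<in> {1..n} \<Longrightarrow> j \<in> {1..n} \<Longrightarrow> i \<noteq> j \<Longrightarrow>
                 s \<in> Ss i \<Longrightarrow> t \<in> Ss j \<Longrightarrow> act (act x s) t = act (act x t) s"
    and bdd: "bounded (range f)"
  shows "(\<forall>s. (\<forall>j\<in>{1..n}. s j \<in> Ss j) \<longrightarrow> diff_chain act s n f = (\<lambda>_. 0))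
     \<longleftrightarrow> (\<exists>fs :: nat \<Rightarrow> 'x \<Rightarrow> complex. f = (\<lambda>x. \<Sum>j=1..n. fs j x) \<and>
            (\<forall>j\<in>{1..n}. \<forall>s\<in>Ss j. koopman act s (fs j) = fs j))"
proof
  assume h: "\<forall>s. (\<forall>j\<in>{1..n}. s j \<in> Ss j) \<longrightarrow> diff_chain act s n f = (\<lambda>_. 0)"
  show "\<exists>fs :: nat \<Rightarrow> 'x \<Rightarrow> complex. f = (\<lambda>x. \<Sum>j=1..n. fs j x) \<and>
            (\<forall>j\<in>{1..n}. \<forall>s\<in>Ss j. koopman act s (fs j) = fs j)"
    apply (rule main[OF act _ _ bdd h])
    using amen apply blast
    using comm apply blast
    done
next
  assume "\<exists>fs :: nat \<Rightarrow> 'x \<Rightarrow> complex. f = (\<lambda>x. \<Sum>j=1..n. fs j x) \<and>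
            (\<forall>j\<in>{1..n}. \<forall>s\<in>Ss j. koopman act s (fs j) = fs j)"
  then obtain fs where fs: "f = (\<lambda>x. \<Sum>j=1..n. fs j x)"
      "\<forall>j\<in>{1..n}. \<forall>s\<in>Ss j. koopman act s (fs j) = fs j" by blast
  show "\<forall>s. (\<forall>j\<in>{1..n}. s j \<in> Ss j) \<longrightarrow> diff_chain act s n f = (\<lambda>_. 0)"
  proof (intro allI impI)
    fix s assume s: "\<forall>j\<in>{1..n}. s j \<in> Ss j"
    have z: "diff_chain act s n (fs j) = (\<lambda>_. 0)" if j: "j \<in> {1..n}" for j
    proof (rule dc_inv[OF j])
      show "\<forall>x. fs j (act x (s j)) = fs j x"
      proof
        fix x
        have "koopman act (s j) (fs j) = fs j" using fs(2) s j by auto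
        then show "fs j (act x (s j)) = fs j x" unfolding koopman_def by (rule fun_cong)
      qed
      show "\<forall>i\<in>{1..n}. \<forall>x. act (act x (s i)) (s j) = act (act x (s j)) (s i)"
      proof (intro ballI allI)
        fix i x assume i: "i \<in> {1..n}"
        show "act (act x (s i)) (s j) = act (act x (s j)) (s i)"
        proof (cases "i = j")
          case False
          then show ?thesis using comm[of i j "s i" "s j" x] s i j by auto
        qed simp
      qed
    qed
    show "diff_chain act s n f = (\<lambda>_. 0)"
      unfolding fs(1) dc_sum using z by simp
  qed
qed

end
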